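(* Let $\mathcal{Z}\subset[0,1]$ be finite, let $\ell:[0,1]\times\{0,1\}\to\mathbb{R}$ be a proper loss, and let $\sigma:[0,1]\to[0,1]$ be any swap function. Then for every run of the forecasting protocol (predictions $p_t\in\mathcal{Z}$ drawn from $\mathcal{P}_t$, labels $y_t\in\{0,1\}$), $$\mathsf{SReg}^{\ell}_{\sigma}=\sum_{p\in\mathcal{Z}}\Big(\sum_{t=1}^T \mathbb{1}\{p_t=p\}\Big)\big(\mathsf{BREG}_{-\ell}(\rho_p,p)-\mathsf{BREG}_{-\ell}(\rho_p,\sigma(p))\big),$$ $$\mathsf{PSReg}^{\ell}_{\sigma}=\sum_{p\in\mathcal{Z}}\Big(\sum_{t=1}^T \mathcal{P}_t(p)\Big)\big(\mathsf{BREG}_{-\ell}(\tilde\rho_p,p)-\mathsf{BREG}_{-\ell}(\tilde\rho_p,\sigma(p))\big).$$ Furthermore, $$\mathsf{SReg}^{\ell}=\sum_{p\in\mathcal{Z}}\sum_{t=1}^T \mathbb{1}\{p_t=p\}\,\mathsf{BREG}_{-\ell}(\rho_p,p),\qquad \mathsf{PSReg}^{\ell}=\sum_{p\in\mathcal{Z}}\sum_{t=1}^T \mathcal{P}_t(p)\,\mathsf{BREG}_{-\ell}(\tilde\rho_p,p).$$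
   Context: Forecasting protocol: for $t=1,\dots,T$, the forecaster chooses a distribution $\mathcal{P}_t$ over a finite set $\mathcal{Z}\subset[0,1]$ (possibly depending on the past), draws a prediction $p_t\sim\mathcal{P}_t$, and simultaneously the adversary chooses $y_t\in\{0,1\}$, which is then revealed. Define $\rho_p=\frac{\sum_t y_t\mathbb{1}\{p_t=p\}}{\sum_t\mathbb{1}\{p_t=p\}}$ and $\tilde\rho_p=\frac{\sum_t y_t\mathcal{P}_t(p)}{\sum_t\mathcal{P}_t(p)}$, with the convention $0/0=0$. A loss $\ell:[0,1]\times\{0,1\}\to\mathbb{R}$ is proper if $\mathbb{E}_{y\sim \mathrm{Ber}(p)}[\ell(p,y)]\le\mathbb{E}_{y\sim\mathrm{Ber}(p)}[\ell(p',y)]$ for all $p,p'\in[0,1]$. Its univariate form is $\ell(p):=p\,\ell(p,1)+(1-p)\,\ell(p,0)$ (a concave function), and a proper loss satisfies $\ell(p,y)=\ell(p)+g_p(y-p)$ with $g_p:=\ell(p,1)-\ell(p,0)$ a supergradient of the univariate form at $p$. The Bregman divergence of $-\ell$ is $\mathsf{BREG}_{-\ell}(x,y):=\ell(y)-\ell(x)+g_y(x-y)$. For a swap function $\sigma$, $\mathsf{SReg}^\ell_\sigma:=\sum_{t=1}^T\big(\ell(p_t,y_t)-\ell(\sigma(p_t),y_t)\big)$ and $\mathsf{PSReg}^\ell_\sigma:=\sum_{p\in\mathcal{Z}}\sum_{t=1}^T\mathcal{P}_t(p)\big(\ell(p,y_t)-\ell(\sigma(p),y_t)\big)$; swap regret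 $\mathsf{SReg}^\ell:=\sup_{\sigma:[0,1]\to[0,1]}\mathsf{SReg}^\ell_\sigma$ and pseudo swap regret $\mathsf{PSReg}^\ell:=\sup_{\sigma:[0,1]\to[0,1]}\mathsf{PSReg}^\ell_\sigma$. *)

theory Defs
  imports Complex_Main
begin

text \<open>A loss is a function \<open>L :: real \<Rightarrow> real \<Rightarrow> real\<close>; only its values on
  \<open>[0,1] \<times> {0,1}\<close> matter. Labels \<open>y\<close> are reals in \<open>{0,1}\<close>.\<close>

definition proper_loss :: "(real \<Rightarrow> real \<Rightarrow> real) \<Rightarrow> bool" where
  "proper_loss L \<longleftrightarrow> (\<forall>p\<in>{0..1}. \<forall>p'\<in>{0..1}.
      p * L p 1 + (1 - p) * L p 0 \<le> p * L p' 1 + (1 - p) * L p' 0)"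

definition univ_loss :: "(real \<Rightarrow> real \<Rightarrow> real) \<Rightarrow> real \<Rightarrow> real" where
  "univ_loss L p = p * L p 1 + (1 - p) * L p 0"

definition loss_grad :: "(real \<Rightarrow> real \<Rightarrow> real) \<Rightarrow> real \<Rightarrow> real" where
  "loss_grad L p = L p 1 - L p 0"

text \<open>Bregman divergence of \<open>-L\<close>: \<open>BREG(x,y) = L(y) - L(x) + g_y (x - y)\<close>.\<close>
definition breg :: "(real \<Rightarrow> real \<Rightarrow> real) \<Rightarrow> real \<Rightarrow> real \<Rightarrow> real" where
  "breg L x y = univ_loss L y - univ_loss L x + loss_grad L y * (x - y)"

text \<open>\<open>\<rho>_q\<close> (with 0/0 = 0, which is Isabelle's division convention).\<close>
definition rho :: "nat \<Rightarrow> (nat \<Rightarrow> real) \<Rightarrow> (nat \<Rightarrow> real) \<Rightarrow> real \<Rightarrow> real" where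
  "rho T p y q = (\<Sum>t=1..T. y t * (if p t = q then 1 else 0)) /
                 (\<Sum>t=1..T. (if p t = q then 1 else 0))"

definition rho_tilde :: "nat \<Rightarrow> (nat \<Rightarrow> real \<Rightarrow> real) \<Rightarrow> (nat \<Rightarrow> real) \<Rightarrow> real \<Rightarrow> real" where
  "rho_tilde T P y q = (\<Sum>t=1..T. y t * P t q) / (\<Sum>t=1..T. P t q)"

definition SReg_sigma :: "(real \<Rightarrow> real \<Rightarrow> real) \<Rightarrow> nat \<Rightarrow> (nat \<Rightarrow> real) \<Rightarrow> (nat \<Rightarrow> real)
    \<Rightarrow> (real \<Rightarrow> real) \<Rightarrow> real" where
  "SReg_sigma L T p y \<sigma> = (\<Sum>t=1..T. L (p t) (y t) - L (\<sigma> (p t)) (y t))"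

definition PSReg_sigma :: "(real \<Rightarrow> real \<Rightarrow> real) \<Rightarrow> real set \<Rightarrow> nat \<Rightarrow> (nat \<Rightarrow> real \<Rightarrow> real)
    \<Rightarrow> (nat \<Rightarrow> real) \<Rightarrow> (real \<Rightarrow> real) \<Rightarrow> real" where
  "PSReg_sigma L Z T P y \<sigma> = (\<Sum>q\<in>Z. \<Sum>t=1..T. P t q * (L q (y t) - L (\<sigma> q) (y t)))"

definition swap_functions :: "(real \<Rightarrow> real) set" where
  "swap_functions = {\<sigma>. \<forall>x\<in>{0..1}. \<sigma> x \<in> {0..1}}"

definition SReg :: "(real \<Rightarrow> real \<Rightarrow> real) \<Rightarrow> nat \<Rightarrow> (nat \<Rightarrow> real) \<Rightarrow> (nat \<Rightarrow> real) \<Rightarrow> real" where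
  "SReg L T p y = (SUP \<sigma>\<in>swap_functions. SReg_sigma L T p y \<sigma>)"

definition PSReg :: "(real \<Rightarrow> real \<Rightarrow> real) \<Rightarrow> real set \<Rightarrow> nat \<Rightarrow> (nat \<Rightarrow> real \<Rightarrow> real)
    \<Rightarrow> (nat \<Rightarrow> real) \<Rightarrow> real" where
  "PSReg L Z T P y = (SUP \<sigma>\<in>swap_functions. PSReg_sigma L Z T P y \<sigma>)"

end

theory Submission imports Defs begin

lemma loss_decomp:
  assumes "b \<in> {0,1}"
  shows "L a b = univ_loss L a + loss_grad L a * (b - a)"
  using assms by (auto simp: univ_loss_def loss_grad_def algebra_simps)

lemma breg_nonneg:
  assumes "proper_loss L" "x \<in> {0..1}" "s \<in> {0..1}"
  shows "breg L x s \<ge> 0"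
proof -
  have "x * L x 1 + (1 - x) * L x 0 \<le> x * L s 1 + (1 - x) * L s 0"
    using assms unfolding proper_loss_def by blast
  then show ?thesis unfolding breg_def univ_loss_def loss_grad_def
    by (simp add: algebra_simps)
qed

lemma breg_self: "breg L x x = 0"
  by (simp add: breg_def)

lemma weighted:
  fixes w y :: "nat \<Rightarrow> real" and A :: "nat set"
  assumes A: "finite A" and w: "\<And>t. t \<in> A \<Longrightarrow> w t \<ge> 0"
    and y: "\<And>t. t \<in> A \<Longrightarrow> y t \<in> {0,1}"
  shows "(\<Sum>t\<in>A. w t * (L q (y t) - L s (y t))) =
     (\<Sum>t\<in>A. w t) * (breg L ((\<Sum>t\<in>A. y t * w t) / (\<Sum>t\<in>A. w t)) q
                     - breg L ((\<Sum>t\<in>A. y t * w t) / (\<Sum>t\<in>A. w t)) s)"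
proof -
  define W where "W = (\<Sum>t\<in>A. w t)"
  define S where "S = (\<Sum>t\<in>A. y t * w t)"
  have "(\<Sum>t\<in>A. w t * (L q (y t) - L s (y t))) =
        (\<Sum>t\<in>A. w t * (univ_loss L q - univ_loss L s) + loss_grad L q * (y t * w t - w t * q)
              - loss_grad L s * (y t * w t - w t * s))"
  proof (rule sum.cong)
    fix t assume t: "t \<in> A"
    show "w t * (L q (y t) - L s (y t)) = w t * (univ_loss L q - univ_loss L s) + loss_grad L q * (y t * w t - w t * q)
              - loss_grad L s * (y t * w t - w t * s)"
    proof -
      have e1: "L q (y t) = univ_loss L q + loss_grad L q * (y t - q)" by (rule loss_decomp[OF y[OF t]])
      have e2: "L s (y t) = univ_loss L s + loss_grad L s * (y t - s)" by (rule loss_decomp[OF y[OF t]])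
      show ?thesis by (simp only: e1 e2) (simp add: algebra_simps)
    qed
  qed simp
  also have "\<dots> = W * (univ_loss L q - univ_loss L s) + loss_grad L q * (S - W * q)
              - loss_grad L s * (S - W * s)"
  proof -
    have "(\<Sum>t\<in>A. w t * (univ_loss L q - univ_loss L s) + loss_grad L q * (y t * w t - w t * q)
              - loss_grad L s * (y t * w t - w t * s)) =
          (\<Sum>t\<in>A. (univ_loss L q - univ_loss L s) * w t + loss_grad L q * (y t * w t) - (loss_grad L q * q) * w t
              - loss_grad L s * (y t * w t) + (loss_grad L s * s) * w t)"
      by (rule sum.cong) (simp_all add: algebra_simps)
    also have "\<dots> = (univ_loss L q - univ_loss L s) * W + loss_grad L q * S - (loss_grad L q * q) * W
              - loss_grad L s * S + (loss_grad L s * s) * W"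
      by (simp only: sum.distrib sum_subtractf sum_distrib_left[symmetric] W_def S_def)
    finally show ?thesis by (simp add: algebra_simps)
  qed
  finally have lhs: "(\<Sum>t\<in>A. w t * (L q (y t) - L s (y t))) = \<dots>" .
  show ?thesis
  proof (cases "W = 0")
    case True
    have "(\<Sum>t\<in>A. w t) = 0" using True by (simp add: W_def)
    hence "\<forall>t\<in>A. w t = 0" using sum_nonneg_eq_0_iff[OF A, of w] w by simp
    hence S0: "S = 0" unfolding S_def by simp
    show ?thesis unfolding W_def[symmetric] S_def[symmetric] lhs using True S0 by simp
  next
    case False
    define x where "x = S / W"
    have Wx: "W * x = S" using False by (simp add: x_def)
    have "W * (breg L x q - breg L x s) = W*(univ_loss L q - univ_loss L s) + loss_grad L q*(W*x - W*q)
       - loss_grad L s*(W*x - W*s)"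
      unfolding breg_def by (simp add: algebra_simps)
    thus ?thesis unfolding lhs W_def[symmetric] S_def[symmetric] x_def[symmetric] Wx by simp
  qed
qed


lemma ratio_01:
  fixes w y :: "nat \<Rightarrow> real" and A :: "nat set"
  assumes A: "finite A" and w: "\<And>t. t \<in> A \<Longrightarrow> w t \<ge> 0"
    and y: "\<And>t. t \<in> A \<Longrightarrow> y t \<in> {0,1}"
  shows "(\<Sum>t\<in>A. y t * w t) / (\<Sum>t\<in>A. w t) \<in> {0..1}"
proof -
  have n0: "0 \<le> (\<Sum>t\<in>A. y t * w t)"
    by (rule sum_nonneg) (use w y in fastforce)
  have nd: "(\<Sum>t\<in>A. y t * w t) \<le> (\<Sum>t\<in>A. w t)"
    by (rule sum_mono) (use w y in fastforce)
  have d0: "0 \<le> (\<Sum>t\<in>A. w t)" by (rule sum_nonneg) (use w in auto)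
  show ?thesis using n0 nd d0
    by (cases "(\<Sum>t\<in>A. w t) = 0") (auto simp: divide_le_eq_1)
qed

lemma part1:
  assumes Z: "finite Z" and p_in: "\<And>t. t \<in> {1..T} \<Longrightarrow> p t \<in> Z"
    and y_in: "\<And>t. t \<in> {1..T} \<Longrightarrow> y t \<in> {0, 1}"
  shows "SReg_sigma L T p y \<sigma> =
           (\<Sum>q\<in>Z. (\<Sum>t=1..T. (if p t = q then 1 else 0)) *
               (breg L (rho T p y q) q - breg L (rho T p y q) (\<sigma> q)))"
proof -
  have "SReg_sigma L T p y \<sigma> = (\<Sum>t=1..T. \<Sum>q\<in>Z. (if p t = q then 1 else 0) * (L q (y t) - L (\<sigma> q) (y t)))"
    unfolding SReg_sigma_def
  proof (rule sum.cong)
    fix t assume t: "t \<in> {1..T}"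
    have "(\<Sum>q\<in>Z. (if p t = q then 1 else 0) * (L q (y t) - L (\<sigma> q) (y t)))
        = (\<Sum>q\<in>Z. if p t = q then (L q (y t) - L (\<sigma> q) (y t)) else 0)"
      by (rule sum.cong) auto
    also have "\<dots> = L (p t) (y t) - L (\<sigma> (p t)) (y t)"
      using p_in[OF t] Z by (simp add: sum.delta)
    finally show "L (p t) (y t) - L (\<sigma> (p t)) (y t) = (\<Sum>q\<in>Z. (if p t = q then 1 else 0) * (L q (y t) - L (\<sigma> q) (y t)))" by simp
  qed simp
  also have "\<dots> = (\<Sum>q\<in>Z. \<Sum>t=1..T. (if p t = q then 1 else 0) * (L q (y t) - L (\<sigma> q) (y t)))"
    by (rule sum.swap)
  also have "\<dots> = (\<Sum>q\<in>Z. (\<Sum>t=1..T. (if p t = q then 1 else 0)) *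
               (breg L (rho T p y q) q - breg L (rho T p y q) (\<sigma> q)))"
    unfolding rho_def
    by (rule sum.cong[OF refl], rule weighted) (use y_in in auto)
  finally show ?thesis .
qed

lemma part2:
  assumes P_nonneg: "\<And>t q. t \<in> {1..T} \<Longrightarrow> q \<in> Z \<Longrightarrow> P t q \<ge> 0"
    and y_in: "\<And>t. t \<in> {1..T} \<Longrightarrow> y t \<in> {0, 1}"
  shows "PSReg_sigma L Z T P y \<sigma> =
           (\<Sum>q\<in>Z. (\<Sum>t=1..T. P t q) *
               (breg L (rho_tilde T P y q) q - breg L (rho_tilde T P y q) (\<sigma> q)))"
  unfolding PSReg_sigma_def rho_tilde_def
  by (rule sum.cong[OF refl], rule weighted) (use y_in P_nonneg in auto)

theorem proposition1:
  fixes Z :: "real set" and L :: "real \<Rightarrow> real \<Rightarrow> real" and \<sigma> :: "real \<Rightarrow> real"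
    and T :: nat and p :: "nat \<Rightarrow> real" and P :: "nat \<Rightarrow> real \<Rightarrow> real" and y :: "nat \<Rightarrow> real"
  assumes Z: "finite Z" "Z \<subseteq> {0..1}"
    and proper: "proper_loss L"
    and swap: "\<sigma> \<in> swap_functions"
    and P_nonneg: "\<And>t q. t \<in> {1..T} \<Longrightarrow> q \<in> Z \<Longrightarrow> P t q \<ge> 0"
    and P_sum: "\<And>t. t \<in> {1..T} \<Longrightarrow> (\<Sum>q\<in>Z. P t q) = 1"
    and p_in: "\<And>t. t \<in> {1..T} \<Longrightarrow> p t \<in> Z"
    and y_in: "\<And>t. t \<in> {1..T} \<Longrightarrow> y t \<in> {0, 1}"
  shows "SReg_sigma L T p y \<sigma> =
           (\<Sum>q\<in>Z. (\<Sum>t=1..T. (if p t = q then 1 else 0)) *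
               (breg L (rho T p y q) q - breg L (rho T p y q) (\<sigma> q))) \<and>
         PSReg_sigma L Z T P y \<sigma> =
           (\<Sum>q\<in>Z. (\<Sum>t=1..T. P t q) *
               (breg L (rho_tilde T P y q) q - breg L (rho_tilde T P y q) (\<sigma> q))) \<and>
         SReg L T p y =
           (\<Sum>q\<in>Z. \<Sum>t=1..T. (if p t = q then 1 else 0) * breg L (rho T p y q) q) \<and>
         PSReg L Z T P y =
           (\<Sum>q\<in>Z. \<Sum>t=1..T. P t q * breg L (rho_tilde T P y q) q)"
proof -
  have p1: "\<And>\<sigma>. SReg_sigma L T p y \<sigma> =
           (\<Sum>q\<in>Z. (\<Sum>t=1..T. (if p t = q then 1 else 0)) *
               (breg L (rho T p y q) q - breg L (rho T p y q) (\<sigma> q)))"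
    by (rule part1[OF Z(1) p_in y_in])
  have p2: "\<And>\<sigma>. PSReg_sigma L Z T P y \<sigma> =
           (\<Sum>q\<in>Z. (\<Sum>t=1..T. P t q) *
               (breg L (rho_tilde T P y q) q - breg L (rho_tilde T P y q) (\<sigma> q)))"
    by (rule part2[OF P_nonneg y_in])
  have rho01: "\<And>q. rho T p y q \<in> {0..1}"
    unfolding rho_def by (rule ratio_01) (use y_in in auto)
  have rhot01: "\<And>q. q \<in> Z \<Longrightarrow> rho_tilde T P y q \<in> {0..1}"
    unfolding rho_tilde_def by (rule ratio_01) (use y_in P_nonneg in auto)
  define M1 where "M1 = (\<Sum>q\<in>Z. (\<Sum>t=1..T. (if p t = q then 1 else 0)) * breg L (rho T p y q) q)"
  define M2 where "M2 = (\<Sum>q\<in>Z. (\<Sum>t=1..T. P t q) * breg L (rho_tilde T P y q) q)"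
  have M1': "(\<Sum>q\<in>Z. \<Sum>t=1..T. (if p t = q then 1 else 0) * breg L (rho T p y q) q) = M1"
    unfolding M1_def by (simp add: sum_distrib_right)
  have M2': "(\<Sum>q\<in>Z. \<Sum>t=1..T. P t q * breg L (rho_tilde T P y q) q) = M2"
    unfolding M2_def by (simp add: sum_distrib_right)
  have "SReg L T p y = M1"
    unfolding SReg_def
  proof (rule cSup_eq_maximum)
    have sw: "rho T p y \<in> swap_functions" using rho01 by (simp add: swap_functions_def)
    have "SReg_sigma L T p y (rho T p y) = M1"
      unfolding p1 M1_def by (simp add: breg_self)
    thus "M1 \<in> (\<lambda>\<sigma>. SReg_sigma L T p y \<sigma>) ` swap_functions" using sw by force
  next
    fix x assume "x \<in> (\<lambda>\<sigma>. SReg_sigma L T p y \<sigma>) ` swap_functions"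
    then obtain s where s: "s \<in> swap_functions" and x: "x = SReg_sigma L T p y s" by blast
    show "x \<le> M1" unfolding x p1 M1_def
    proof (rule sum_mono)
      fix q assume q: "q \<in> Z"
      have q01: "q \<in> {0..1}" using q Z(2) by auto
      have "s q \<in> {0..1}" using s q01 by (simp add: swap_functions_def)
      hence b: "breg L (rho T p y q) (s q) \<ge> 0" by (rule breg_nonneg[OF proper rho01])
      have "(\<Sum>t=1..T. (if p t = q then 1 else 0)) \<ge> (0::real)" by (rule sum_nonneg) auto
      with b show "(\<Sum>t=1..T. (if p t = q then 1 else 0)) * (breg L (rho T p y q) q - breg L (rho T p y q) (s q))
           \<le> (\<Sum>t=1..T. (if p t = q then 1 else 0)) * breg L (rho T p y q) q"
        by (simp add: mult_left_mono algebra_simps)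
    qed
  qed
  moreover have "PSReg L Z T P y = M2"
    unfolding PSReg_def
  proof (rule cSup_eq_maximum)
    define s0 where "s0 = (\<lambda>x. if x \<in> Z then rho_tilde T P y x else 0)"
    have sw: "s0 \<in> swap_functions" using rhot01 by (simp add: swap_functions_def s0_def)
    have "PSReg_sigma L Z T P y s0 = M2"
      unfolding p2 M2_def by (rule sum.cong) (simp_all add: s0_def breg_self)
    thus "M2 \<in> (\<lambda>\<sigma>. PSReg_sigma L Z T P y \<sigma>) ` swap_functions" using sw by force
  next
    fix x assume "x \<in> (\<lambda>\<sigma>. PSReg_sigma L Z T P y \<sigma>) ` swap_functions"
    then obtain s where s: "s \<in> swap_functions" and x: "x = PSReg_sigma L Z T P y s" by blast
    show "x \<le> M2" unfolding x p2 M2_def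
    proof (rule sum_mono)
      fix q assume q: "q \<in> Z"
      have q01: "q \<in> {0..1}" using q Z(2) by auto
      have "s q \<in> {0..1}" using s q01 by (simp add: swap_functions_def)
      hence b: "breg L (rho_tilde T P y q) (s q) \<ge> 0" by (rule breg_nonneg[OF proper rhot01[OF q]])
      have "(\<Sum>t=1..T. P t q) \<ge> 0" by (rule sum_nonneg) (use P_nonneg q in auto)
      with b show "(\<Sum>t=1..T. P t q) * (breg L (rho_tilde T P y q) q - breg L (rho_tilde T P y q) (s q))
           \<le> (\<Sum>t=1..T. P t q) * breg L (rho_tilde T P y q) q"
        by (simp add: mult_left_mono algebra_simps)
    qed
  qed
  ultimately show ?thesis using p1 p2 M1' M2' by simp
qed

end
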